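(* The standard unit sphere $S^n$ is $\Phi$-SSU if and only if $n>4$.
   Context: A Riemannian $n$-manifold $N$ is $\Phi$-SSU if there is an isometric immersion $N\to\mathbb R^q$ with second fundamental form $\mathsf B$ such that for every $y\in N$ and every unit $\mathsf x\in T_yN$, $\sum_{\beta=1}^n\big(4|\mathsf B(\mathsf x,\mathsf e_\beta)|^2-\langle \mathsf B(\mathsf x,\mathsf x),\mathsf B(\mathsf e_\beta,\mathsf e_\beta)\rangle\big)<0$, where $\{\mathsf e_\beta\}$ is an orthonormal basis of $T_yN$. *)

theory Defs
  imports "HOL-Analysis.Analysis"
begin

text \<open>The unit sphere S^n is modelled as sphere 0 1 in real^'n, with n = CARD('n) - 1.
  Euclidean space R^q is modelled by vectors nat => real whose coordinates j < q are used
  (everything is truncated to zero at coordinates j >= q).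
  A smooth map f : S^n -> R^q is represented by its radial (degree-0 homogeneous)
  extension F to real^'n - {0}, given coordinatewise by F j.\<close>

definition qinner :: "nat \<Rightarrow> (nat \<Rightarrow> real) \<Rightarrow> (nat \<Rightarrow> real) \<Rightarrow> real" where
  "qinner q a b = (\<Sum>j<q. a j * b j)"

definition dF :: "nat \<Rightarrow> (nat \<Rightarrow> real^'n \<Rightarrow> real) \<Rightarrow> real^'n \<Rightarrow> real^'n \<Rightarrow> nat \<Rightarrow> real" where
  "dF q F y v = (\<lambda>j. if j < q then frechet_derivative (F j) (at y) v else 0)"

definition d2F :: "nat \<Rightarrow> (nat \<Rightarrow> real^'n \<Rightarrow> real) \<Rightarrow> real^'n \<Rightarrow> real^'n \<Rightarrow> real^'n \<Rightarrow> nat \<Rightarrow> real" where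
  "d2F q F y u v = (\<lambda>j. if j < q then
      frechet_derivative (\<lambda>x. frechet_derivative (F j) (at x) v) (at y) u else 0)"

definition tangent_image :: "nat \<Rightarrow> (nat \<Rightarrow> real^'n \<Rightarrow> real) \<Rightarrow> real^'n \<Rightarrow> (nat \<Rightarrow> real) set" where
  "tangent_image q F y = {dF q F y v | v. v \<bullet> y = 0}"

definition orth_proj :: "nat \<Rightarrow> (nat \<Rightarrow> real) set \<Rightarrow> (nat \<Rightarrow> real) \<Rightarrow> nat \<Rightarrow> real" where
  "orth_proj q W w = (THE p. p \<in> W \<and> (\<forall>u\<in>W. qinner q (\<lambda>j. w j - p j) u = 0))"

text \<open>Second fundamental form: normal component of the second derivative.  Since the
  extension is homogeneous of degree 0, the Gauss-formula correction term vanishes.\<close>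
definition sff :: "nat \<Rightarrow> (nat \<Rightarrow> real^'n \<Rightarrow> real) \<Rightarrow> real^'n \<Rightarrow> real^'n \<Rightarrow> real^'n \<Rightarrow> nat \<Rightarrow> real" where
  "sff q F y u v = (let w = d2F q F y u v in (\<lambda>j. w j - orth_proj q (tangent_image q F y) w j))"

fun iter_dd :: "(real^'n) list \<Rightarrow> (real^'n \<Rightarrow> real) \<Rightarrow> real^'n \<Rightarrow> real" where
  "iter_dd [] g = g"
| "iter_dd (v # vs) g = (\<lambda>x. frechet_derivative (iter_dd vs g) (at x) v)"

definition smooth_on :: "(real^'n) set \<Rightarrow> (real^'n \<Rightarrow> real) \<Rightarrow> bool" where
  "smooth_on S g \<longleftrightarrow> (\<forall>vs. iter_dd vs g differentiable_on S)"

definition isometric_immersion_sphere :: "nat \<Rightarrow> (nat \<Rightarrow> real^'n \<Rightarrow> real) \<Rightarrow> bool" where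
  "isometric_immersion_sphere q F \<longleftrightarrow>
     (\<forall>j<q. smooth_on (- {0}) (F j) \<and> (\<forall>x t. x \<noteq> 0 \<longrightarrow> t > 0 \<longrightarrow> F j (t *\<^sub>R x) = F j x))
   \<and> (\<forall>y\<in>sphere 0 1. \<forall>v. v \<bullet> y = 0 \<longrightarrow> qinner q (dF q F y v) (dF q F y v) = v \<bullet> v)"

definition Phi_SSU_sphere :: "'n::finite itself \<Rightarrow> bool" where
  "Phi_SSU_sphere _ \<longleftrightarrow>
    (\<exists>q (F :: nat \<Rightarrow> real^'n \<Rightarrow> real). isometric_immersion_sphere q F \<and>
      (\<forall>y\<in>sphere 0 1. \<forall>x. x \<bullet> y = 0 \<and> norm x = 1 \<longrightarrow>
        (\<forall>e :: nat \<Rightarrow> real^'n.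
           (\<forall>\<beta><CARD('n) - 1. \<forall>\<gamma><CARD('n) - 1. e \<beta> \<bullet> e \<gamma> = (if \<beta> = \<gamma> then 1 else 0)) \<and>
           (\<forall>\<beta><CARD('n) - 1. e \<beta> \<bullet> y = 0) \<longrightarrow>
           (\<Sum>\<beta><CARD('n) - 1.
               4 * qinner q (sff q F y x (e \<beta>)) (sff q F y x (e \<beta>))
             - qinner q (sff q F y x x) (sff q F y (e \<beta>) (e \<beta>))) < 0)))"

end

theory Submission imports Defs begin


inductive sm :: "(real^'n \<Rightarrow> real) \<Rightarrow> bool" where
  sm_const: "sm (\<lambda>x. c)"
| sm_lin: "sm (\<lambda>x. x \<bullet> a)"
| sm_inv: "sm (\<lambda>x. inverse (norm x))"
| sm_add: "sm f \<Longrightarrow> sm g \<Longrightarrow> sm (\<lambda>x. f x + g x)"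
| sm_mult: "sm f \<Longrightarrow> sm g \<Longrightarrow> sm (\<lambda>x. f x * g x)"

lemma inv_norm_deriv:
  fixes x :: "real^'n"
  assumes "x \<noteq> 0"
  shows "((\<lambda>x. inverse (norm x)) has_derivative
     (\<lambda>v. - (x \<bullet> v) * inverse (norm x) * inverse (norm x) * inverse (norm x))) (at x)"
proof -
  have "((\<lambda>x. inverse (norm x)) has_derivative
     (\<lambda>v. - (inverse (norm x) * (v \<bullet> sgn x) * inverse (norm x)))) (at x)"
    using assms by (intro Deriv.has_derivative_inverse has_derivative_norm) auto
  moreover have "(\<lambda>v. - (inverse (norm x) * (v \<bullet> sgn x) * inverse (norm x))) =
     (\<lambda>v. - (x \<bullet> v) * inverse (norm x) * inverse (norm x) * inverse (norm x))"
    by (auto simp: sgn_div_norm inner_commute field_simps)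
  ultimately show ?thesis by simp
qed

lemma sm_deriv:
  fixes f :: "real^'n \<Rightarrow> real"
  assumes "sm f"
  shows "\<exists>D. (\<forall>x. x \<noteq> 0 \<longrightarrow> (f has_derivative D x) (at x)) \<and>
             (\<forall>v. \<exists>h. sm h \<and> (\<forall>x. x \<noteq> 0 \<longrightarrow> D x v = h x))"
  using assms
proof induction
  case (sm_const c)
  show ?case
    by (rule exI[of _ "\<lambda>x v. 0"]) (auto intro: sm.sm_const)
next
  case (sm_lin a)
  show ?case
    apply (rule exI[of _ "\<lambda>x v. v \<bullet> a"])
    apply (auto intro!: sm.sm_const derivative_eq_intros)
    done
next
  case sm_inv
  show ?case
  proof (rule exI[of _ "\<lambda>x v. - (x \<bullet> v) * inverse (norm x) * inverse (norm x) * inverse (norm x)"], intro conjI allI impI)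
    fix x :: "real^'n" assume "x \<noteq> 0" then show "((\<lambda>x. inverse (norm x)) has_derivative
     (\<lambda>v. - (x \<bullet> v) * inverse (norm x) * inverse (norm x) * inverse (norm x))) (at x)"
      by (rule inv_norm_deriv)
  next
    fix v :: "real^'n"
    have "sm (\<lambda>x. (x \<bullet> (-v)) * inverse (norm x) * inverse (norm x) * inverse (norm x))"
      by (intro sm.intros)
    then show "\<exists>h. sm h \<and> (\<forall>x. x \<noteq> 0 \<longrightarrow> - (x \<bullet> v) * inverse (norm x) * inverse (norm x) * inverse (norm x) = h x)"
      by (auto intro!: exI[of _ "(\<lambda>x. (x \<bullet> (-v)) * inverse (norm x) * inverse (norm x) * inverse (norm x))"])
  qed
next
  case (sm_add f g)
  then obtain D1 D2 where d1: "\<forall>x. x \<noteq> 0 \<longrightarrow> (f has_derivative D1 x) (at x)" "\<forall>v. \<exists>h. sm h \<and> (\<forall>x. x \<noteq> 0 \<longrightarrow> D1 x v = h x)"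
    and d2: "\<forall>x. x \<noteq> 0 \<longrightarrow> (g has_derivative D2 x) (at x)" "\<forall>v. \<exists>h. sm h \<and> (\<forall>x. x \<noteq> 0 \<longrightarrow> D2 x v = h x)"
    by blast
  show ?case
  proof (rule exI[of _ "\<lambda>x v. D1 x v + D2 x v"], intro conjI allI impI)
    fix x :: "real^'n" assume "x \<noteq> 0" then show "((\<lambda>x. f x + g x) has_derivative (\<lambda>v. D1 x v + D2 x v)) (at x)"
      using d1 d2 by (intro has_derivative_add) auto
  next
    fix v
    obtain h1 h2 where "sm h1" "\<forall>x. x \<noteq> 0 \<longrightarrow> D1 x v = h1 x" "sm h2" "\<forall>x. x \<noteq> 0 \<longrightarrow> D2 x v = h2 x"
      using d1 d2 by blast
    then show "\<exists>h. sm h \<and> (\<forall>x. x \<noteq> 0 \<longrightarrow> D1 x v + D2 x v = h x)"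
      by (intro exI[of _ "\<lambda>x. h1 x + h2 x"]) (auto intro: sm.intros)
  qed
next
  case (sm_mult f g)
  then obtain D1 D2 where d1: "\<forall>x. x \<noteq> 0 \<longrightarrow> (f has_derivative D1 x) (at x)" "\<forall>v. \<exists>h. sm h \<and> (\<forall>x. x \<noteq> 0 \<longrightarrow> D1 x v = h x)"
    and d2: "\<forall>x. x \<noteq> 0 \<longrightarrow> (g has_derivative D2 x) (at x)" "\<forall>v. \<exists>h. sm h \<and> (\<forall>x. x \<noteq> 0 \<longrightarrow> D2 x v = h x)"
    by blast
  show ?case
  proof (rule exI[of _ "\<lambda>x v. f x * D2 x v + D1 x v * g x"], intro conjI allI impI)
    fix x :: "real^'n" assume "x \<noteq> 0" then show "((\<lambda>x. f x * g x) has_derivative (\<lambda>v. f x * D2 x v + D1 x v * g x)) (at x)"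
      using d1 d2 by (intro has_derivative_mult) auto
  next
    fix v
    obtain h1 h2 where "sm h1" "\<forall>x. x \<noteq> 0 \<longrightarrow> D1 x v = h1 x" "sm h2" "\<forall>x. x \<noteq> 0 \<longrightarrow> D2 x v = h2 x"
      using d1 d2 by blast
    then show "\<exists>h. sm h \<and> (\<forall>x. x \<noteq> 0 \<longrightarrow> f x * D2 x v + D1 x v * g x = h x)"
      using sm_mult.hyps
      by (intro exI[of _ "\<lambda>x. f x * h2 x + h1 x * g x"]) (auto intro: sm.intros)
  qed
qed

lemma sm_iter:
  fixes f :: "real^'n \<Rightarrow> real"
  assumes "sm f"
  shows "\<exists>h. sm h \<and> (\<forall>x. x \<noteq> 0 \<longrightarrow> iter_dd vs f x = h x)"
proof (induction vs)
  case Nil then show ?case using assms by auto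
next
  case (Cons v vs)
  then obtain h where h: "sm h" "\<forall>x. x \<noteq> 0 \<longrightarrow> iter_dd vs f x = h x" by blast
  obtain D where D: "\<forall>x. x \<noteq> 0 \<longrightarrow> (h has_derivative D x) (at x)" "\<forall>v. \<exists>h. sm h \<and> (\<forall>x. x \<noteq> 0 \<longrightarrow> D x v = h x)"
    using sm_deriv[OF h(1)] by blast
  obtain h' where h': "sm h'" "\<forall>x. x \<noteq> 0 \<longrightarrow> D x v = h' x" using D(2) by blast
  have "iter_dd (v # vs) f x = h' x" if "x \<noteq> 0" for x
  proof -
    have "(iter_dd vs f has_derivative D x) (at x)"
      using has_derivative_transform_within_open[of h "D x" x UNIV "- {0}" "iter_dd vs f"] D(1) h(2) that
      by auto
    then have "frechet_derivative (iter_dd vs f) (at x) = D x" using frechet_derivative_at by metis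
    then show ?thesis using h'(2) that by simp
  qed
  then show ?case using h'(1) by blast
qed

lemma sm_smooth:
  fixes f :: "real^'n \<Rightarrow> real"
  assumes "sm f"
  shows "smooth_on (- {0}) f"
  unfolding smooth_on_def
proof
  fix vs
  obtain h where h: "sm h" "\<forall>x. x \<noteq> 0 \<longrightarrow> iter_dd vs f x = h x" using sm_iter[OF assms] by blast
  obtain D where D: "\<forall>x. x \<noteq> 0 \<longrightarrow> (h has_derivative D x) (at x)"
    using sm_deriv[OF h(1)] by blast
  show "iter_dd vs f differentiable_on - {0}"
    unfolding differentiable_on_def
  proof
    fix x :: "real^'n" assume "x \<in> - {0}"
    then have "(iter_dd vs f has_derivative D x) (at x)"
      using has_derivative_transform_within_open[of h "D x" x UNIV "- {0}" "iter_dd vs f"] D(1) h(2)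
      by auto
    then show "iter_dd vs f differentiable at x within - {0}"
      using differentiable_def has_derivative_at_withinI by blast
  qed
qed



lemma qinner_self_nonneg: "0 \<le> qinner q a a"
  unfolding qinner_def by (intro sum_nonneg) auto

lemma key_ineq:
  fixes B :: "nat \<Rightarrow> nat \<Rightarrow> nat \<Rightarrow> real"
  assumes "n \<le> 4"
  shows "0 \<le> (\<Sum>\<alpha><n. \<Sum>\<beta><n. 4 * qinner q (B \<alpha> \<beta>) (B \<alpha> \<beta>) - qinner q (B \<alpha> \<alpha>) (B \<beta> \<beta>))"
proof -
  have e1: "(\<Sum>\<alpha><n. \<Sum>\<beta><n. qinner q (B \<alpha> \<alpha>) (B \<beta> \<beta>)) = (\<Sum>j<q. (\<Sum>\<alpha><n. B \<alpha> \<alpha> j)\<^sup>2)"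
    unfolding qinner_def power2_eq_square sum_product
    by (simp add: sum.swap[of _ "{..<q}"] sum.swap[of _ "{..<q}" "{..<n}"])
  have "(\<Sum>j<q. (\<Sum>\<alpha><n. B \<alpha> \<alpha> j)\<^sup>2) \<le> (\<Sum>j<q. (\<Sum>\<alpha><n. (B \<alpha> \<alpha> j)\<^sup>2) * n)"
    by (intro sum_mono) (metis card_lessThan sum_squared_le_sum_of_squares)
  also have "\<dots> \<le> (\<Sum>j<q. (\<Sum>\<alpha><n. (B \<alpha> \<alpha> j)\<^sup>2) * 4)"
    using assms by (intro sum_mono mult_left_mono) (auto intro: sum_nonneg)
  also have "\<dots> = 4 * (\<Sum>\<alpha><n. qinner q (B \<alpha> \<alpha>) (B \<alpha> \<alpha>))"
    unfolding qinner_def power2_eq_square sum_distrib_left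
    by (subst sum.swap) (simp add: algebra_simps sum_distrib_left)
  also have "(\<Sum>\<alpha><n. qinner q (B \<alpha> \<alpha>) (B \<alpha> \<alpha>)) \<le> (\<Sum>\<alpha><n. \<Sum>\<beta><n. qinner q (B \<alpha> \<beta>) (B \<alpha> \<beta>))"
  proof (intro sum_mono)
    fix \<alpha> assume "\<alpha> \<in> {..<n}"
    then show "qinner q (B \<alpha> \<alpha>) (B \<alpha> \<alpha>) \<le> (\<Sum>\<beta><n. qinner q (B \<alpha> \<beta>) (B \<alpha> \<beta>))"
      using member_le_sum[of \<alpha> "{..<n}" "\<lambda>\<beta>. qinner q (B \<alpha> \<beta>) (B \<alpha> \<beta>)"] qinner_self_nonneg
      by auto
  qed
  finally have "(\<Sum>\<alpha><n. \<Sum>\<beta><n. qinner q (B \<alpha> \<alpha>) (B \<beta> \<beta>)) \<le> 4 * (\<Sum>\<alpha><n. \<Sum>\<beta><n. qinner q (B \<alpha> \<beta>) (B \<alpha> \<beta>))"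
    using e1 by linarith
  then show ?thesis
    by (simp add: sum_subtractf sum_distrib_left)
qed

lemma hard_dir:
  assumes "CARD('n::finite) \<ge> 2" and "Phi_SSU_sphere TYPE('n)"
  shows "CARD('n) - 1 > 4"
proof (rule ccontr)
  assume n4: "\<not> CARD('n) - 1 > 4"
  define n where "n = CARD('n) - 1"
  obtain q and F :: "nat \<Rightarrow> real^'n \<Rightarrow> real" where
    C: "\<forall>y\<in>sphere 0 1. \<forall>x. x \<bullet> y = 0 \<and> norm x = 1 \<longrightarrow>
        (\<forall>e :: nat \<Rightarrow> real^'n.
           (\<forall>\<beta><CARD('n) - 1. \<forall>\<gamma><CARD('n) - 1. e \<beta> \<bullet> e \<gamma> = (if \<beta> = \<gamma> then 1 else 0)) \<and>
           (\<forall>\<beta><CARD('n) - 1. e \<beta> \<bullet> y = 0) \<longrightarrow>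
           (\<Sum>\<beta><CARD('n) - 1.
               4 * qinner q (sff q F y x (e \<beta>)) (sff q F y x (e \<beta>))
             - qinner q (sff q F y x x) (sff q F y (e \<beta>) (e \<beta>))) < 0)"
    using assms(2) unfolding Phi_SSU_sphere_def by blast
  obtain k :: 'n where True by blast
  have "card (UNIV - {k}) = n" unfolding n_def by (simp add: card_Diff_singleton)
  then obtain h where h: "bij_betw h {0..<n} (UNIV - {k})"
    using ex_bij_betw_nat_finite[of "UNIV - {k} :: 'n set"] by auto
  define y :: "real^'n" where "y = axis k 1"
  define e :: "nat \<Rightarrow> real^'n" where "e = (\<lambda>\<beta>. axis (h \<beta>) 1)"
  have hk: "\<beta> < n \<Longrightarrow> h \<beta> \<noteq> k" for \<beta> using h by (auto simp: bij_betw_def)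
  have hinj: "\<beta> < n \<Longrightarrow> \<gamma> < n \<Longrightarrow> h \<beta> = h \<gamma> \<Longrightarrow> \<beta> = \<gamma>" for \<beta> \<gamma>
    using h by (auto simp: bij_betw_def inj_on_def)
  have y: "y \<in> sphere 0 1" by (simp add: y_def)
  have eo: "\<forall>\<beta><CARD('n) - 1. \<forall>\<gamma><CARD('n) - 1. e \<beta> \<bullet> e \<gamma> = (if \<beta> = \<gamma> then 1 else 0)"
    using hinj unfolding n_def e_def by (auto simp: inner_axis_axis)
  have ey: "\<forall>\<beta><CARD('n) - 1. e \<beta> \<bullet> y = 0"
    using hk unfolding n_def e_def y_def by (auto simp: inner_axis_axis)
  let ?B = "\<lambda>\<alpha> \<beta>. sff q F y (e \<alpha>) (e \<beta>)"
  have lt: "(\<Sum>\<beta><n. 4 * qinner q (?B \<alpha> \<beta>) (?B \<alpha> \<beta>) - qinner q (?B \<alpha> \<alpha>) (?B \<beta> \<beta>)) < 0"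
    if "\<alpha> < n" for \<alpha>
  proof -
    have "e \<alpha> \<bullet> y = 0 \<and> norm (e \<alpha>) = 1" using ey that unfolding n_def e_def by auto
    then show ?thesis using C y eo ey unfolding n_def by blast
  qed
  have "n \<ge> 1" using assms(1) unfolding n_def by simp
  then have ne: "{..<n} \<noteq> {}" using lessThan_empty_iff by (metis not_one_le_zero)
  have "(\<Sum>\<alpha><n. \<Sum>\<beta><n. 4 * qinner q (?B \<alpha> \<beta>) (?B \<alpha> \<beta>) - qinner q (?B \<alpha> \<alpha>) (?B \<beta> \<beta>)) < (\<Sum>\<alpha><n. 0)"
    using lt ne by (intro sum_strict_mono) auto
  moreover have "n \<le> 4" using n4 unfolding n_def by simp
  ultimately show False using key_ineq[of n q ?B] by simp
qed

lemma bessel: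
  fixes e :: "nat \<Rightarrow> real^'n"
  assumes "\<forall>\<beta><n. \<forall>\<gamma><n. e \<beta> \<bullet> e \<gamma> = (if \<beta> = \<gamma> then 1 else 0)"
  shows "(\<Sum>\<beta><n. (x \<bullet> e \<beta>)\<^sup>2) \<le> x \<bullet> x"
proof -
  define c where "c = (\<lambda>\<beta>. x \<bullet> e \<beta>)"
  define p where "p = (\<Sum>\<beta><n. c \<beta> *\<^sub>R e \<beta>)"
  have xp: "x \<bullet> p = (\<Sum>\<beta><n. (c \<beta>)\<^sup>2)"
    unfolding p_def c_def by (simp add: inner_sum_right power2_eq_square)
  have "p \<bullet> p = (\<Sum>\<beta><n. \<Sum>\<gamma><n. c \<beta> * c \<gamma> * (e \<gamma> \<bullet> e \<beta>))"
    unfolding p_def by (simp add: inner_sum_right inner_sum_left sum_distrib_left mult.assoc)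
  also have "\<dots> = (\<Sum>\<beta><n. (c \<beta>)\<^sup>2)"
  proof (rule sum.cong[OF refl])
    fix \<beta> assume b: "\<beta> \<in> {..<n}"
    have "(\<Sum>\<gamma><n. c \<beta> * c \<gamma> * (e \<gamma> \<bullet> e \<beta>)) = (\<Sum>\<gamma><n. if \<gamma> = \<beta> then c \<beta> * c \<beta> else 0)"
      using assms b by (intro sum.cong) auto
    also have "\<dots> = (c \<beta>)\<^sup>2" using b by (simp add: power2_eq_square)
    finally show "(\<Sum>\<gamma><n. c \<beta> * c \<gamma> * (e \<gamma> \<bullet> e \<beta>)) = (c \<beta>)\<^sup>2" .
  qed
  finally have pp: "p \<bullet> p = (\<Sum>\<beta><n. (c \<beta>)\<^sup>2)" .
  have "0 \<le> (x - p) \<bullet> (x - p)" by simp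
  also have "\<dots> = x \<bullet> x - 2 * (x \<bullet> p) + p \<bullet> p" by (simp add: inner_diff inner_commute)
  finally show ?thesis using xp pp unfolding c_def by simp
qed

lemma dF_formula:
  fixes x a :: "real^'n"
  assumes "x \<noteq> 0"
  shows "((\<lambda>x. (x \<bullet> a) * inverse (norm x)) has_derivative
     (\<lambda>v. (x \<bullet> a) * (- (x \<bullet> v) * inverse (norm x) * inverse (norm x) * inverse (norm x)) + (v \<bullet> a) * inverse (norm x))) (at x)"
  by (rule has_derivative_mult[OF _ inv_norm_deriv[OF assms]]) (auto intro!: derivative_eq_intros)

lemma lin_d: "((\<lambda>x. x \<bullet> a) has_derivative (\<lambda>h. h \<bullet> a)) F"
  by (auto intro!: derivative_eq_intros)
lemma aux_real: "N = 1 \<Longrightarrow> b = 0 \<Longrightarrow> c = 0 \<Longrightarrow> a*( -b*N*N*(-c*N*N*N) + (-b*N*(-c*N*N*N) + (-b*(-c*N*N*N) + -d*N)*N)*N) + e*(-b*N*N*N) + (f*(-c*N*N*N) + 0*N) = -d*(a::real)"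
  by simp
lemma d2F_val:
  fixes y a v u :: "real^'n"
  assumes "norm y = 1" "y \<bullet> u = 0" "y \<bullet> v = 0"
  shows "\<exists>D. ((\<lambda>x. (x \<bullet> a) * (- (x \<bullet> v) * inverse (norm x) * inverse (norm x) * inverse (norm x)) + (v \<bullet> a) * inverse (norm x)) has_derivative D) (at y)
     \<and> D u = - (u \<bullet> v) * (y \<bullet> a)"
proof -
  have y0: "y \<noteq> 0" using assms by auto
  show ?thesis
    apply (rule exI, rule conjI)
     apply (rule has_derivative_add has_derivative_mult has_derivative_minus lin_d inv_norm_deriv[OF y0] has_derivative_const)+
    apply (rule aux_real)
    using assms by auto
qed
lemma easy_dir:
  assumes n5: "CARD('n::finite) - 1 > 4"
  shows "Phi_SSU_sphere TYPE('n)"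
proof -
  obtain g where g: "bij_betw g {0..<CARD('n)} (UNIV::'n set)"
    using ex_bij_betw_nat_finite[of "UNIV::'n set"] by auto
  define a :: "nat \<Rightarrow> real^'n" where "a = (\<lambda>j. axis (g j) 1)"
  define F :: "nat \<Rightarrow> real^'n \<Rightarrow> real" where "F = (\<lambda>j x. (x \<bullet> a j) * inverse (norm x))"
  define E :: "real^'n \<Rightarrow> nat \<Rightarrow> real" where "E = (\<lambda>z j. if j < CARD('n) then z $ g j else 0)"
  let ?q = "CARD('n)"
  have qE: "qinner ?q (E z) (E w) = z \<bullet> w" for z w
  proof -
    have "qinner ?q (E z) (E w) = (\<Sum>j\<in>{0..<?q}. z $ g j * w $ g j)"
      unfolding qinner_def E_def by (simp add: atLeast0LessThan)
    also have "\<dots> = (\<Sum>i\<in>UNIV. z $ i * w $ i)"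
      using sum.reindex_bij_betw[OF g, of "\<lambda>i. z $ i * w $ i"] by simp
    also have "\<dots> = z \<bullet> w" by (simp add: inner_vec_def)
    finally show ?thesis .
  qed
  have E0: "E 0 = (\<lambda>j. 0)" by (simp add: E_def fun_eq_iff)
  have Ediff: "(\<lambda>j. E w j - E v j) = E (w - v)" for w v by (simp add: E_def fun_eq_iff)
  have fd: "frechet_derivative (F j) (at x) = (\<lambda>v. (x \<bullet> a j) * (- (x \<bullet> v) * inverse (norm x) * inverse (norm x) * inverse (norm x)) + (v \<bullet> a j) * inverse (norm x))"
    if "x \<noteq> 0" for j x
    using frechet_derivative_at[OF dF_formula[OF that, of "a j"]] unfolding F_def by simp
  have dF_eq: "dF ?q F y v = E v" if "norm y = 1" "v \<bullet> y = 0" for y v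
  proof -
    have "y \<noteq> 0" using that by auto
    then show ?thesis using that
      by (auto simp: dF_def E_def fun_eq_iff fd a_def inner_axis inner_commute)
  qed
  have d2F_eq: "d2F ?q F y u v = E ((- (u \<bullet> v)) *\<^sub>R y)" if y1: "norm y = 1" and uy: "u \<bullet> y = 0" and vy: "v \<bullet> y = 0" for y u v
  proof -
    have "frechet_derivative (\<lambda>x. frechet_derivative (F j) (at x) v) (at y) u = - (u \<bullet> v) * (y $ g j)" for j
    proof -
      obtain D where D: "((\<lambda>x. (x \<bullet> a j) * (- (x \<bullet> v) * inverse (norm x) * inverse (norm x) * inverse (norm x)) + (v \<bullet> a j) * inverse (norm x)) has_derivative D) (at y)"
        "D u = - (u \<bullet> v) * (y \<bullet> a j)"
        using d2F_val[of y u v "a j"] y1 uy vy by (auto simp: inner_commute)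
      have "y \<noteq> 0" using y1 by auto
      have "((\<lambda>x. frechet_derivative (F j) (at x) v) has_derivative D) (at y)"
        apply (rule has_derivative_transform_within_open[OF D(1), of "- {0}"])
        using \<open>y \<noteq> 0\<close> fd by auto
      then have "frechet_derivative (\<lambda>x. frechet_derivative (F j) (at x) v) (at y) = D"
        by (rule frechet_derivative_at[symmetric])
      then show ?thesis using D(2) by (simp add: a_def inner_axis)
    qed
    then show ?thesis by (auto simp: d2F_def E_def fun_eq_iff)
  qed
  have TI: "tangent_image ?q F y = E ` {v. v \<bullet> y = 0}" if "norm y = 1" for y
    using dF_eq[OF that] unfolding tangent_image_def by (auto; force)
  have OP: "orth_proj ?q (tangent_image ?q F y) (E (c *\<^sub>R y)) = (\<lambda>j. 0)" if y1: "norm y = 1" for y c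
    unfolding orth_proj_def TI[OF y1]
  proof (rule the_equality)
    show "(\<lambda>j. 0) \<in> E ` {v. v \<bullet> y = 0} \<and> (\<forall>u\<in>E ` {v. v \<bullet> y = 0}. qinner ?q (\<lambda>j. E (c *\<^sub>R y) j - 0) u = 0)"
      using qE E0 by (auto intro!: image_eqI[of _ _ 0] simp: inner_commute)
  next
    fix p assume p: "p \<in> E ` {v. v \<bullet> y = 0} \<and> (\<forall>u\<in>E ` {v. v \<bullet> y = 0}. qinner ?q (\<lambda>j. E (c *\<^sub>R y) j - p j) u = 0)"
    then obtain v where v: "v \<bullet> y = 0" "p = E v" by auto
    have "qinner ?q (\<lambda>j. E (c *\<^sub>R y) j - E v j) (E v) = 0" using p v by auto
    then have "(c *\<^sub>R y - v) \<bullet> v = 0" unfolding Ediff qE .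
    moreover have "(c *\<^sub>R y - v) \<bullet> v = c * (y \<bullet> v) - v \<bullet> v" by (simp add: inner_diff_left)
    moreover have "y \<bullet> v = 0" using v(1) by (simp add: inner_commute)
    ultimately have "v \<bullet> v = 0" by simp
    then have "v = 0" by simp
    then show "p = (\<lambda>j. 0)" using v E0 by simp
  qed
  have sff_eq: "sff ?q F y u v = E ((- (u \<bullet> v)) *\<^sub>R y)" if "norm y = 1" "u \<bullet> y = 0" "v \<bullet> y = 0" for y u v
    unfolding sff_def Let_def d2F_eq[OF that] OP[OF that(1)] by simp
  have iso: "isometric_immersion_sphere ?q F"
    unfolding isometric_immersion_sphere_def
  proof (intro conjI allI impI ballI)
    fix j assume "j < ?q"
    have "sm (\<lambda>x. (x \<bullet> a j) * inverse (norm x))" by (intro sm.intros)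
    then show "smooth_on (- {0}) (F j)" unfolding F_def by (rule sm_smooth)
  next
    fix j and x :: "real^'n" and t :: real assume "x \<noteq> 0" "t > 0"
    then show "F j (t *\<^sub>R x) = F j x" unfolding F_def by (simp add: field_simps)
  next
    fix y v :: "real^'n" assume "y \<in> sphere 0 1" "v \<bullet> y = 0"
    then show "qinner ?q (dF ?q F y v) (dF ?q F y v) = v \<bullet> v" using dF_eq qE by simp
  qed
  show ?thesis
    unfolding Phi_SSU_sphere_def
  proof (intro exI conjI ballI allI impI)
    show "isometric_immersion_sphere ?q F" by (rule iso)
  next
    fix y x :: "real^'n" and e :: "nat \<Rightarrow> real^'n"
    assume y: "y \<in> sphere 0 1" and x: "x \<bullet> y = 0 \<and> norm x = 1"
      and e: "(\<forall>\<beta><CARD('n) - 1. \<forall>\<gamma><CARD('n) - 1. e \<beta> \<bullet> e \<gamma> = (if \<beta> = \<gamma> then 1 else 0)) \<and>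
           (\<forall>\<beta><CARD('n) - 1. e \<beta> \<bullet> y = 0)"
    have y1: "norm y = 1" using y by simp
    have yy: "y \<bullet> y = 1" using y1 by (simp add: dot_square_norm)
    have xx: "x \<bullet> x = 1" using x by (simp add: dot_square_norm)
    have trm: "4 * qinner ?q (sff ?q F y x (e \<beta>)) (sff ?q F y x (e \<beta>))
             - qinner ?q (sff ?q F y x x) (sff ?q F y (e \<beta>) (e \<beta>)) = 4 * (x \<bullet> e \<beta>)\<^sup>2 - 1"
      if "\<beta> < CARD('n) - 1" for \<beta>
    proof -
      have eb: "e \<beta> \<bullet> y = 0" "e \<beta> \<bullet> e \<beta> = 1" using e that by auto
      show ?thesis
        using x eb yy xx
        by (simp add: sff_eq[OF y1] qE power2_eq_square)
    qed
    have "(\<Sum>\<beta><CARD('n) - 1.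
               4 * qinner ?q (sff ?q F y x (e \<beta>)) (sff ?q F y x (e \<beta>))
             - qinner ?q (sff ?q F y x x) (sff ?q F y (e \<beta>) (e \<beta>)))
        = (\<Sum>\<beta><CARD('n) - 1. 4 * (x \<bullet> e \<beta>)\<^sup>2 - 1)"
      using trm by (intro sum.cong) auto
    also have "\<dots> = 4 * (\<Sum>\<beta><CARD('n) - 1. (x \<bullet> e \<beta>)\<^sup>2) - real (CARD('n) - 1)"
      by (simp add: sum_subtractf sum_distrib_left)
    also have "\<dots> \<le> 4 - real (CARD('n) - 1)"
      using bessel[of "CARD('n) - 1" e x] e xx by simp
    also have "\<dots> < 0" using n5 by simp
    finally show "(\<Sum>\<beta><CARD('n) - 1.
               4 * qinner ?q (sff ?q F y x (e \<beta>)) (sff ?q F y x (e \<beta>))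
             - qinner ?q (sff ?q F y x x) (sff ?q F y (e \<beta>) (e \<beta>))) < 0" .
  qed
qed

theorem corollary5p2:
  assumes "CARD('n::finite) \<ge> 2"
  shows "Phi_SSU_sphere TYPE('n) \<longleftrightarrow> CARD('n) - 1 > 4"
  using hard_dir[OF assms] easy_dir by blast

end
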